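(* Let $A$ be a finite alphabet, let $\mathbf{w}$ be an infinite LSP word over $A$ and let $f$ be a bLSP morphism on $A$. The following are equivalent: (1) $f(\mathbf{w})$ is not LSP; (2) there exist pairwise distinct letters $a,b,c$ such that $\mathbf{w}$ is $(a,b,c)$-fragile and the longest common prefix of $f(b)$ and $f(c)$ is strictly longer than the longest common prefix of $f(a)$ and $f(b)$; (3) there exist pairwise distinct letters $a,b,c$ such that $\mathbf{w}$ is $(a,b,c)$-fragile and $f$ is LSP $(a,b,c)$-breaking.
   Context: A finite word $u$ is a left special factor of a word $w$ if there are distinct letters $x\neq y$ with $xu$ and $yu$ factors of $w$. A word is LSP if every left special factor of it is a prefix of it. A bLSP morphism on $A$ is an endomorphism $f$ of $A^*$ such that there is a letter $\alpha$ with $f(\alpha)=\alpha$ and, for every letter $\beta\neq\alpha$, there is a letter $\gamma$ with $f(\beta)=f(\gamma)\beta$. For pairwise distinct letters $a,b,c$, an infinite word $\mathbf{w}$ is $(a,b,c)$-fragile if there exist a finite word $u$ and distinct letters $\beta\neq\gamma$ such that $ua$ is a prefix of $\mathbf{w}$ and $\beta ub$, $\gamma uc$ are factors of $\mathbf{w}$. A morphism $f$ is LSP $(a,b,c)$-breaking if for every $(a,b,c)$-fragile infinite LSP word $\mathbf{v}$, $f(\mathbf{v})$ is not LSP. *)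

theory Defs
  imports Main "HOL-Library.Sublist"
begin

definition factor_inf :: "'a list \<Rightarrow> (nat \<Rightarrow> 'a) \<Rightarrow> bool" where
  "factor_inf u w \<longleftrightarrow> (\<exists>i. u = map w [i..<i + length u])"

definition prefix_inf :: "'a list \<Rightarrow> (nat \<Rightarrow> 'a) \<Rightarrow> bool" where
  "prefix_inf u w \<longleftrightarrow> u = map w [0..<length u]"

definition left_special_inf :: "'a list \<Rightarrow> (nat \<Rightarrow> 'a) \<Rightarrow> bool" where
  "left_special_inf u w \<longleftrightarrow>
     (\<exists>x y. x \<noteq> y \<and> factor_inf (x # u) w \<and> factor_inf (y # u) w)"

definition LSP_inf :: "(nat \<Rightarrow> 'a) \<Rightarrow> bool" where
  "LSP_inf w \<longleftrightarrow> (\<forall>u. left_special_inf u w \<longrightarrow> prefix_inf u w)"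

definition bLSP :: "('a \<Rightarrow> 'a list) \<Rightarrow> bool" where
  "bLSP f \<longleftrightarrow> (\<exists>\<alpha>. f \<alpha> = [\<alpha>] \<and> (\<forall>\<beta>. \<beta> \<noteq> \<alpha> \<longrightarrow> (\<exists>\<gamma>. f \<beta> = f \<gamma> @ [\<beta>])))"

text \<open>Image of an infinite word under a morphism: the infinite concatenation
  f(w 0) f(w 1) ...  For non-erasing morphisms (all images nonempty, as is the case for
  bLSP morphisms) the n-th letter is already determined by the first n+1 blocks.\<close>

definition morph_inf :: "('a \<Rightarrow> 'a list) \<Rightarrow> (nat \<Rightarrow> 'a) \<Rightarrow> (nat \<Rightarrow> 'a)" where
  "morph_inf f w n = concat (map (f \<circ> w) [0..<Suc n]) ! n"

definition fragile :: "'a \<Rightarrow> 'a \<Rightarrow> 'a \<Rightarrow> (nat \<Rightarrow> 'a) \<Rightarrow> bool" where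
  "fragile a b c w \<longleftrightarrow>
     (\<exists>u \<beta> \<gamma>. \<beta> \<noteq> \<gamma> \<and> prefix_inf (u @ [a]) w
        \<and> factor_inf (\<beta> # u @ [b]) w \<and> factor_inf (\<gamma> # u @ [c]) w)"

definition LSP_breaking :: "('a \<Rightarrow> 'a list) \<Rightarrow> 'a \<Rightarrow> 'a \<Rightarrow> 'a \<Rightarrow> bool" where
  "LSP_breaking f a b c \<longleftrightarrow>
     (\<forall>v. fragile a b c v \<and> LSP_inf v \<longrightarrow> \<not> LSP_inf (morph_inf f v))"

end

theory Submission imports Defs begin

lemma lcp_ge:
  assumes "n \<le> length xs" "n \<le> length ys" "take n xs = take n ys"
  shows "n \<le> length (longest_common_prefix xs ys)"
proof -
  have p1: "prefix (take n xs) xs" by (rule take_is_prefix)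
  have p2: "prefix (take n xs) ys" unfolding assms(3) by (rule take_is_prefix)
  have "prefix (take n xs) (longest_common_prefix xs ys)"
    using p1 p2 by (rule longest_common_prefix_max_prefix)
  then have "length (take n xs) \<le> length (longest_common_prefix xs ys)" by (rule prefix_length_le)
  then show ?thesis using assms(1) by simp
qed

lemma lcp_neq:
  "length (longest_common_prefix xs ys) < length xs \<Longrightarrow> length (longest_common_prefix xs ys) < length ys
   \<Longrightarrow> xs ! length (longest_common_prefix xs ys) \<noteq> ys ! length (longest_common_prefix xs ys)"
  by (induction xs ys rule: longest_common_prefix.induct) auto

lemma lcp_comm: "longest_common_prefix xs ys = longest_common_prefix ys xs"
  by (induction xs ys rule: longest_common_prefix.induct) auto

lemma lcp_nth:
  "t < length (longest_common_prefix xs ys) \<Longrightarrow> xs ! t = ys ! t"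
  by (induction xs ys arbitrary: t rule: longest_common_prefix.induct) (auto simp: nth_Cons split: if_splits nat.splits)

lemma lcp_len: "length (longest_common_prefix xs ys) \<le> length xs"
  using longest_common_prefix_prefix1 by (rule prefix_length_le)

lemma lcp_len2: "length (longest_common_prefix xs ys) \<le> length ys"
  using longest_common_prefix_prefix2 by (rule prefix_length_le)

locale blsp =
  fixes f :: "'a \<Rightarrow> 'a list" and \<alpha> :: 'a
  assumes f\<alpha>: "f \<alpha> = [\<alpha>]" and fb: "\<And>\<beta>. \<beta> \<noteq> \<alpha> \<Longrightarrow> \<exists>\<gamma>. f \<beta> = f \<gamma> @ [\<beta>]"
begin

lemma f_ne: "f \<beta> \<noteq> []"
  using f\<alpha> fb by (cases "\<beta> = \<alpha>") force+

lemma f_last: "last (f \<beta>) = \<beta>"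
  using f\<alpha> fb by (cases "\<beta> = \<alpha>") force+

lemma f_inj: "f \<beta> = f \<gamma> \<Longrightarrow> \<beta> = \<gamma>"
  by (metis f_last)

lemma f_len1: "length (f z) = 1 \<Longrightarrow> z = \<alpha>"
proof (rule ccontr)
  assume "length (f z) = 1" "z \<noteq> \<alpha>"
  then obtain g where "f z = f g @ [z]" using fb by blast
  then show False using \<open>length (f z) = 1\<close> f_ne[of g] by simp
qed

lemma take_f: "k < length (f \<beta>) \<Longrightarrow> take (Suc k) (f \<beta>) = f (f \<beta> ! k)"
proof (induction "length (f \<beta>)" arbitrary: \<beta> k rule: less_induct)
  case less
  show ?case
  proof (cases "\<beta> = \<alpha>")
    case True then show ?thesis using less.prems f\<alpha> by simp
  next
    case False
    then obtain g where g: "f \<beta> = f g @ [\<beta>]" using fb by blast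
    show ?thesis
    proof (cases "k < length (f g)")
      case True
      then have "take (Suc k) (f g) = f (f g ! k)" using less.hyps[of g k] g by simp
      then show ?thesis using g True by (simp add: nth_append)
    next
      case False
      then have "k = length (f g)" using less.prems g by simp
      then show ?thesis using g by simp
    qed
  qed
qed

lemma f_hd: "f \<beta> ! 0 = \<alpha>"
proof -
  have "take 1 (f \<beta>) = f (f \<beta> ! 0)" using take_f[of 0 \<beta>] f_ne by simp
  moreover have "length (take 1 (f \<beta>)) = 1" using f_ne[of \<beta>] by (cases "f \<beta>") auto
  ultimately have "length (f (f \<beta> ! 0)) = 1" by simp
  then show ?thesis using f_len1 by blast
qed

lemma f_len_nth: "k < length (f \<beta>) \<Longrightarrow> length (f (f \<beta> ! k)) = Suc k"
proof -
  assume k: "k < length (f \<beta>)"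
  have "length (take (Suc k) (f \<beta>)) = Suc k" using k by simp
  then show ?thesis using take_f[OF k] by simp
qed

lemma f_nalpha: "0 < k \<Longrightarrow> k < length (f \<beta>) \<Longrightarrow> f \<beta> ! k \<noteq> \<alpha>"
  using f_len_nth[of k \<beta>] f\<alpha> by auto

lemma f_parent: "0 < k \<Longrightarrow> k < length (f \<beta>) \<Longrightarrow> f \<beta> ! (k - 1) = f (f \<beta> ! k) ! (length (f (f \<beta> ! k)) - 2)"
proof -
  assume k: "0 < k" "k < length (f \<beta>)"
  have "f (f \<beta> ! k) ! (k-1) = take (Suc k) (f \<beta>) ! (k - 1)" using take_f[OF k(2)] by simp
  also have "\<dots> = f \<beta> ! (k-1)" using k by simp
  finally show ?thesis using f_len_nth[OF k(2)] by simp
qed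


definition S :: "(nat \<Rightarrow> 'a) \<Rightarrow> nat \<Rightarrow> nat" where
  "S w n = length (concat (map (f \<circ> w) [0..<n]))"

definition blk :: "(nat \<Rightarrow> 'a) \<Rightarrow> nat \<Rightarrow> nat \<Rightarrow> 'a list" where
  "blk w m k = concat (map f (map w [m..<m+k]))"

lemma S_0[simp]: "S w 0 = 0" by (simp add: S_def)
lemma S_Suc: "S w (Suc n) = S w n + length (f (w n))" by (simp add: S_def)

lemma len_concat_ge: "n \<le> length (concat (map (f \<circ> w) [0..<n]))"
proof (induction n)
  case (Suc n)
  have "0 < length (f (w n))" using f_ne[of "w n"] by simp
  moreover have "length (concat (map (f \<circ> w) [0..<Suc n])) = length (concat (map (f \<circ> w) [0..<n])) + length (f (w n))" by simp
  ultimately show ?case using Suc.IH by linarith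
qed simp

lemma S_ge: "n \<le> S w n" using len_concat_ge by (simp add: S_def)

lemma concat_split: "concat (map (f \<circ> w) [0..<m+k]) = concat (map (f \<circ> w) [0..<m]) @ blk w m k"
proof -
  have "[0..<m+k] = [0..<m] @ [m..<m+k]" by (rule upt_add_eq_append) simp
  then show ?thesis by (simp add: blk_def)
qed

lemma S_add: "S w (m + k) = S w m + length (blk w m k)"
  by (simp add: S_def concat_split)

lemma S_mono: "m < n \<Longrightarrow> S w m < S w n"
proof (induction n)
  case (Suc n) then show ?case using f_ne[of "w n"] by (auto simp: S_Suc less_Suc_eq)
qed simp

lemma S_mono_iff: "S w m < S w n \<longleftrightarrow> m < n"
  using S_mono[of m n w] S_mono[of n m w] by (cases m n rule: linorder_cases) auto

lemma S_inj: "S w m = S w n \<longleftrightarrow> m = n"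
  using S_mono[of m n w] S_mono[of n m w] by (cases m n rule: linorder_cases) auto

lemma F_nth:
  assumes "q < length (concat (map (f \<circ> w) [0..<N]))"
  shows "morph_inf f w q = concat (map (f \<circ> w) [0..<N]) ! q"
proof -
  have L: "Suc q \<le> length (concat (map (f \<circ> w) [0..<Suc q]))" by (rule len_concat_ge)
  show ?thesis
  proof (cases "N \<le> Suc q")
    case True
    then have "concat (map (f \<circ> w) [0..<Suc q]) = concat (map (f \<circ> w) [0..<N]) @ blk w N (Suc q - N)"
      using concat_split[of w N "Suc q - N"] by simp
    then show ?thesis using assms by (simp add: morph_inf_def nth_append)
  next
    case False
    then have "concat (map (f \<circ> w) [0..<N]) = concat (map (f \<circ> w) [0..<Suc q]) @ blk w (Suc q) (N - Suc q)"
      using concat_split[of w "Suc q" "N - Suc q"] by simp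
    moreover have "q < length (concat (map (f \<circ> w) [0..<Suc q]))" using L by simp
    ultimately show ?thesis by (simp only: morph_inf_def nth_append) simp
  qed
qed

lemma F_blk: "t < length (blk w m k) \<Longrightarrow> morph_inf f w (S w m + t) = blk w m k ! t"
proof -
  assume t: "t < length (blk w m k)"
  have "S w m + t < length (concat (map (f \<circ> w) [0..<m+k]))"
    using t by (simp add: concat_split S_def)
  then show ?thesis using F_nth[of "S w m + t" w "m+k"] by (simp add: concat_split S_def nth_append)
qed

lemma blk_1: "blk w n (Suc 0) = f (w n)" by (simp add: blk_def)

lemma F_block: "t < length (f (w n)) \<Longrightarrow> morph_inf f w (S w n + t) = f (w n) ! t"
  using F_blk[of t w n 1] by (simp add: blk_1)

lemma cover: "\<exists>n t. q = S w n + t \<and> t < length (f (w n))"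
proof (induction q)
  case 0 then show ?case using f_ne[of "w 0"] by (intro exI[of _ 0]) auto
next
  case (Suc q)
  then obtain n t where nt: "q = S w n + t" "t < length (f (w n))" by blast
  show ?case
  proof (cases "Suc t < length (f (w n))")
    case True then show ?thesis using nt by (intro exI[of _ n] exI[of _ "Suc t"]) auto
  next
    case False then show ?thesis using nt f_ne[of "w (Suc n)"]
      by (intro exI[of _ "Suc n"] exI[of _ 0]) (auto simp: S_Suc)
  qed
qed

lemma F_alpha: "morph_inf f w q = \<alpha> \<longleftrightarrow> (\<exists>n. q = S w n)"
proof
  assume a: "morph_inf f w q = \<alpha>"
  obtain n t where nt: "q = S w n + t" "t < length (f (w n))" using cover by blast
  then have "f (w n) ! t = \<alpha>" using a F_block by simp
  then have "t = 0" using f_nalpha nt(2) by blast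
  then show "\<exists>n. q = S w n" using nt by auto
next
  assume "\<exists>n. q = S w n"
  then obtain n where "q = S w n" by blast
  then show "morph_inf f w q = \<alpha>" using F_block[of 0 w n] f_ne[of "w n"] f_hd by simp
qed

lemma F_parent:
  assumes "morph_inf f w q \<noteq> \<alpha>"
  shows "morph_inf f w (q - 1) = f (morph_inf f w q) ! (length (f (morph_inf f w q)) - 2)"
proof -
  obtain n t where nt: "q = S w n + t" "t < length (f (w n))" using cover by blast
  have t0: "t \<noteq> 0"
  proof
    assume "t = 0"
    then have "q = S w n" using nt by simp
    then show False using assms F_alpha by blast
  qed
  have "morph_inf f w q = f (w n) ! t" using nt F_block by simp
  moreover have "morph_inf f w (q - 1) = f (w n) ! (t - 1)" using nt t0 F_block[of "t-1" w n]
    by (simp add: Suc_leI)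
  ultimately show ?thesis using f_parent[of t "w n"] t0 nt by simp
qed

lemma F_before: "0 < n \<Longrightarrow> morph_inf f w (S w n - 1) = w (n - 1)"
proof -
  assume "0 < n"
  then obtain m where m: "n = Suc m" by (cases n) auto
  have "0 < length (f (w m))" using f_ne[of "w m"] by simp
  moreover have "S w n = S w m + length (f (w m))" by (simp add: m S_Suc)
  ultimately have "S w n - 1 = S w m + (length (f (w m)) - 1)" by linarith
  then have "morph_inf f w (S w n - 1) = f (w m) ! (length (f (w m)) - 1)"
    using F_block[of "length (f (w m)) - 1" w m] f_ne[of "w m"] by simp
  also have "\<dots> = w m" using f_last[of "w m"] f_ne[of "w m"] by (simp add: last_conv_nth)
  finally show ?thesis using m by simp
qed

lemma blk_eq: "map w [m..<m+k] = map v [m'..<m'+k] \<Longrightarrow> blk w m k = blk v m' k"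
  by (simp add: blk_def)

lemma blk_Suc: "blk w m (Suc k) = blk w m k @ f (w (m + k))"
  by (simp add: blk_def)


lemma S_add_ge: "S w m + k \<le> S w (m + k)"
proof (induction k)
  case (Suc k)
  have "1 \<le> length (f (w (m+k)))" using f_ne[of "w (m+k)"] by (cases "f (w (m+k))") auto
  moreover have "S w (m + Suc k) = S w (m+k) + length (f (w (m+k)))" by (simp add: S_Suc)
  ultimately show ?case using Suc.IH by linarith
qed simp

lemma exists_step: "P 0 \<Longrightarrow> \<not> P n \<Longrightarrow> \<exists>k. P k \<and> \<not> P (Suc k)"
  by (induction n) auto

lemma map_cons: "map g [i..<i + Suc L] = g i # map g [Suc i..<Suc i + L]"
proof -
  have "[i..<i + Suc L] = i # [Suc i..<i + Suc L]" using upt_conv_Cons[of i "i + Suc L"] by simp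
  moreover have "i + Suc L = Suc i + L" by simp
  ultimately show ?thesis by (simp only: list.map)
qed

lemma lsp_prefix:
  assumes "LSP_inf w" "x \<noteq> y" "factor_inf (x # u) w" "factor_inf (y # u) w"
  shows "map w [0..<length u] = u"
proof -
  have "left_special_inf u w" unfolding left_special_inf_def using assms(2,3,4) by blast
  then have "prefix_inf u w" using assms(1) unfolding LSP_inf_def by blast
  then show ?thesis unfolding prefix_inf_def by simp
qed

lemma factor_at: "factor_inf (map w [i..<i+n]) w"
  unfolding factor_inf_def by (intro exI[of _ i]) simp

lemma factor_cons: "0 < m \<Longrightarrow> factor_inf (w (m - 1) # map w [m..<m+k]) w"
proof -
  assume "0 < m"
  then have e: "w (m - 1) # map w [m..<m+k] = map w [m-1..<(m-1) + Suc k]"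
    by (simp add: upt_conv_Cons)
  show ?thesis unfolding e by (rule factor_at)
qed

lemma prefix_from_blocks:
  assumes "map w [0..<k] = map w [m..<m+k]" "L \<le> S w (m+k) - S w m"
  shows "map (morph_inf f w) [S w m..<S w m + L] = map (morph_inf f w) [0..<L]"
proof (rule nth_equalityI)
  fix t assume "t < length (map (morph_inf f w) [S w m..<S w m + L])"
  then have t: "t < L" by simp
  have e: "blk w 0 k = blk w m k" using blk_eq[of w 0 k w m] assms(1) by simp
  have tl: "t < length (blk w m k)" using t assms(2) S_add[of w m k] by simp
  have "morph_inf f w (S w m + t) = blk w m k ! t" using F_blk[OF tl] .
  also have "\<dots> = morph_inf f w (S w 0 + t)" using F_blk[of t w 0 k] tl e by simp
  finally show "map (morph_inf f w) [S w m..<S w m + L] ! t = map (morph_inf f w) [0..<L] ! t"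
    using t by simp
qed simp

lemma align:
  assumes "\<forall>t<L. morph_inf f w (S w m + t) = morph_inf f w (S w m' + t)"
    "S w (m+k) - S w m = S w (m'+k) - S w m'"
    "S w (Suc (m+k)) - S w m < L"
  shows "S w (Suc (m'+k)) - S w m' \<le> S w (Suc (m+k)) - S w m"
proof -
  let ?D = "S w (Suc (m+k)) - S w m"
  have mm: "S w m \<le> S w (Suc (m+k))" "S w m \<le> S w (m+k)" "S w m' \<le> S w (m'+k)"
    using S_add_ge[of w m "Suc k"] S_add_ge[of w m k] S_add_ge[of w m' k] by auto
  have "morph_inf f w (S w m + ?D) = \<alpha>" using mm F_alpha by auto
  moreover have "morph_inf f w (S w m + ?D) = morph_inf f w (S w m' + ?D)" using assms(1,3) by blast
  ultimately have "morph_inf f w (S w m' + ?D) = \<alpha>" by simp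
  then obtain n where n: "S w m' + ?D = S w n" using F_alpha by blast
  have "1 \<le> length (f (w (m+k)))" using f_ne[of "w (m+k)"] by (cases "f (w (m+k))") auto
  moreover have "S w (Suc (m+k)) = S w (m+k) + length (f (w (m+k)))" by (rule S_Suc)
  ultimately have "S w (m'+k) < S w n"
    using n assms(2) mm by linarith
  then have "m' + k < n" using S_mono_iff by blast
  then have "S w (Suc (m'+k)) \<le> S w n" using S_mono[of "Suc (m'+k)" n w] by (cases "Suc (m'+k) = n") auto
  then show ?thesis using n by simp
qed


lemma dir1:
  assumes LSP: "LSP_inf w" and nl: "\<not> LSP_inf (morph_inf f w)"
  shows "\<exists>a b c. a \<noteq> b \<and> a \<noteq> c \<and> b \<noteq> c \<and> fragile a b c w \<and>
           length (longest_common_prefix (f b) (f c)) > length (longest_common_prefix (f a) (f b))"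
proof -
  let ?F = "morph_inf f w"
  obtain U where ls: "left_special_inf U ?F" and np: "\<not> prefix_inf U ?F"
    using nl unfolding LSP_inf_def by blast
  obtain x y where xy: "x \<noteq> y" and fx: "factor_inf (x # U) ?F" and fy: "factor_inf (y # U) ?F"
    using ls unfolding left_special_inf_def by blast
  have "\<exists>i. x # U = map ?F [i..<i + length (x # U)]" using fx unfolding factor_inf_def .
  then obtain i where xi: "x # U = map ?F [i..<i + length (x # U)]" ..
  have "\<exists>j. y # U = map ?F [j..<j + length (y # U)]" using fy unfolding factor_inf_def .
  then obtain j where yj: "y # U = map ?F [j..<j + length (y # U)]" ..
  define L where "L = length U"
  have xi': "x # U = ?F i # map ?F [Suc i..<Suc i + L]" using xi map_cons[of ?F i L] by (simp add: L_def)
  have yj': "y # U = ?F j # map ?F [Suc j..<Suc j + L]" using yj map_cons[of ?F j L] by (simp add: L_def)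
  have Ui: "U = map ?F [Suc i..<Suc i + L]" using xi' by simp
  have Uj: "U = map ?F [Suc j..<Suc j + L]" using yj' by simp
  have xF: "x = ?F i" using xi' by simp
  have yF: "y = ?F j" using yj' by simp
  have Ut: "\<And>t. t < L \<Longrightarrow> ?F (Suc i + t) = ?F (Suc j + t)"
  proof -
    fix t assume "t < L"
    then have "U ! t = ?F (Suc i + t)" "U ! t = ?F (Suc j + t)"
      using nth_map_upt[of t "Suc i + L" "Suc i" ?F] nth_map_upt[of t "Suc j + L" "Suc j" ?F] Ui Uj by auto
    then show "?F (Suc i + t) = ?F (Suc j + t)" by simp
  qed
  have L0: "0 < L"
  proof (rule ccontr)
    assume "\<not> 0 < L" then have "U = []" by (simp add: L_def)
    then show False using np by (simp add: prefix_inf_def)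
  qed
  have Fi: "?F (Suc i) = \<alpha>"
  proof (rule ccontr)
    assume a: "?F (Suc i) \<noteq> \<alpha>"
    have e: "?F (Suc i) = ?F (Suc j)" using Ut[OF L0] by simp
    then have "?F (Suc j) \<noteq> \<alpha>" using a by simp
    then have "x = y" using F_parent[OF a] F_parent[of w "Suc j"] e xF yF by simp
    then show False using xy by simp
  qed
  have Fj: "?F (Suc j) = \<alpha>" using Ut[OF L0] Fi by simp
  obtain m where m: "Suc i = S w m" using Fi F_alpha by blast
  obtain m' where m': "Suc j = S w m'" using Fj F_alpha by blast
  have m0: "0 < m" using m by (cases m) auto
  have m'0: "0 < m'" using m' by (cases m') auto
  have "S w m - 1 = i" "S w m' - 1 = j" using m m' by simp_all
  then have xw: "x = w (m - 1)" and yw: "y = w (m' - 1)"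
    using F_before[OF m0, of w] F_before[OF m'0, of w] xF yF by simp_all
  have UF: "\<And>t. t < L \<Longrightarrow> ?F (S w m + t) = ?F (S w m' + t)" using Ut m m' by simp
  have Um: "U = map ?F [S w m..<S w m + L]" using Ui m by simp
  have Unp: "map ?F [S w m..<S w m + L] \<noteq> map ?F [0..<L]"
  proof -
    have "U \<noteq> map ?F [0..<L]" using np unfolding prefix_inf_def L_def .
    then show ?thesis using Um by simp
  qed
  define P where "P k \<longleftrightarrow> map w [m..<m+k] = map w [m'..<m'+k] \<and> S w (m+k) - S w m < L" for k
  have P0: "P 0" using L0 by (simp add: P_def)
  have "\<not> (S w (m+L) - S w m < L)" using S_add_ge[of w m L] by linarith
  then have PL: "\<not> P L" by (simp add: P_def)
  obtain k where Pk: "P k" and nPk: "\<not> P (Suc k)" using exists_step[of P L] P0 PL by blast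
  define u where "u = map w [m..<m+k]"
  define b where "b = w (m+k)"
  define c where "c = w (m'+k)"
  define a where "a = w k"
  have uu: "map w [m'..<m'+k] = u" using Pk by (simp add: P_def u_def)
  have blkeq: "blk w m k = blk w m' k" using blk_eq[of w m k w m'] uu u_def by simp
  define d where "d = S w (m+k) - S w m"
  have dm: "S w (m+k) = S w m + d" using S_add[of w m k] by (simp add: d_def)
  have dm': "S w (m'+k) = S w m' + d" using S_add[of w m' k] S_add[of w m k] blkeq by (simp add: d_def)
  have dL: "d < L" using Pk by (simp add: P_def d_def)
  have Db: "S w (Suc (m+k)) = S w m + d + length (f b)" using dm by (simp add: S_Suc b_def)
  have Dc: "S w (Suc (m'+k)) = S w m' + d + length (f c)" using dm' by (simp add: S_Suc c_def)
  have uxf: "factor_inf (x # u) w" using factor_cons[OF m0, of w k] xw u_def by simp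
  have uyf: "factor_inf (y # u) w" using factor_cons[OF m'0, of w k] yw uu by simp
  have upre: "map w [0..<k] = u" using lsp_prefix[OF LSP xy uxf uyf] by (simp add: u_def)
  have blk0: "blk w 0 k = blk w m k" using blk_eq[of w 0 k w m] upre u_def by simp
  have Sk: "S w k = d" using S_add[of w 0 k] S_add[of w m k] blk0 by (simp add: d_def)
  \<comment> \<open>U fits into block b and block c\<close>
  have LD: "L \<le> d + length (f b)"
  proof (rule ccontr)
    assume "\<not> L \<le> d + length (f b)"
    then have lt: "S w (Suc (m+k)) - S w m < L" using Db by simp
    have a1: "S w (Suc (m'+k)) - S w m' \<le> S w (Suc (m+k)) - S w m"
      using align[of L w m m' k] UF dm dm' lt by simp
    have lt': "S w (Suc (m'+k)) - S w m' < L" using a1 lt by simp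
    have a2: "S w (Suc (m+k)) - S w m \<le> S w (Suc (m'+k)) - S w m'"
      using align[of L w m' m k] UF dm dm' lt' by simp
    have len: "length (f b) = length (f c)" using a1 a2 Db Dc by simp
    have "f b = f c"
    proof (rule nth_equalityI)
      show "length (f b) = length (f c)" by (rule len)
      fix t assume t: "t < length (f b)"
      have "f b ! t = ?F (S w (m+k) + t)" using F_block[of t w "m+k"] t by (simp add: b_def)
      also have "\<dots> = ?F (S w m + (d + t))" using dm by (simp add: add.assoc)
      also have "\<dots> = ?F (S w m' + (d + t))" using UF[of "d+t"] t lt Db by simp
      also have "\<dots> = ?F (S w (m'+k) + t)" using dm' by (simp add: add.assoc)
      also have "\<dots> = f c ! t" using F_block[of t w "m'+k"] t len by (simp add: c_def)
      finally show "f b ! t = f c ! t" .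
    qed
    then have "b = c" by (rule f_inj)
    then have "P (Suc k)" using Pk lt by (simp add: P_def b_def c_def)
    then show False using nPk by simp
  qed
  have LD': "L \<le> d + length (f c)"
  proof (rule ccontr)
    assume "\<not> L \<le> d + length (f c)"
    then have lt': "S w (Suc (m'+k)) - S w m' < L" using Dc by simp
    have "S w (Suc (m+k)) - S w m \<le> S w (Suc (m'+k)) - S w m'"
      using align[of L w m' m k] UF dm dm' lt' by simp
    then show False using lt' LD Db by simp
  qed
  have bc: "b \<noteq> c"
  proof
    assume bc: "b = c"
    have "factor_inf (x # u @ [b]) w" using factor_cons[OF m0, of w "Suc k"] xw u_def b_def by simp
    moreover have "factor_inf (y # u @ [b]) w" using factor_cons[OF m'0, of w "Suc k"] yw uu bc c_def by simp
    ultimately have "map w [0..<length (u @ [b])] = u @ [b]" by (rule lsp_prefix[OF LSP xy])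
    then have "map w [0..<Suc k] = u @ [b]" by (simp add: u_def)
    then have "map w [0..<Suc k] = map w [m..<m + Suc k]" using u_def b_def by simp
    then have "map ?F [S w m..<S w m + L] = map ?F [0..<L]"
      using prefix_from_blocks[of w "Suc k" m L] LD Db by simp
    then show False using Unp by simp
  qed
  have lbc: "L - d \<le> length (longest_common_prefix (f b) (f c))"
  proof (rule lcp_ge)
    show "L - d \<le> length (f b)" "L - d \<le> length (f c)" using LD LD' by auto
    show "take (L - d) (f b) = take (L - d) (f c)"
    proof (rule nth_equalityI)
      show "length (take (L - d) (f b)) = length (take (L - d) (f c))" using LD LD' by auto
      fix t assume "t < length (take (L - d) (f b))"
      then have t: "t < L - d" "t < length (f b)" "t < length (f c)" using LD LD' by auto
      have "f b ! t = ?F (S w (m+k) + t)" using F_block[of t w "m+k"] t by (simp add: b_def)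
      also have "\<dots> = ?F (S w m + (d + t))" using dm by (simp add: add.assoc)
      also have "\<dots> = ?F (S w m' + (d + t))" using UF[of "d+t"] t by simp
      also have "\<dots> = ?F (S w (m'+k) + t)" using dm' by (simp add: add.assoc)
      also have "\<dots> = f c ! t" using F_block[of t w "m'+k"] t by (simp add: c_def)
      finally show "take (L - d) (f b) ! t = take (L - d) (f c) ! t" using t by simp
    qed
  qed
  have lab: "length (longest_common_prefix (f a) (f b)) < L - d"
  proof (rule ccontr)
    assume "\<not> length (longest_common_prefix (f a) (f b)) < L - d"
    then have q: "L - d \<le> length (longest_common_prefix (f a) (f b))" by simp
    have "map ?F [S w m..<S w m + L] = map ?F [0..<L]"
    proof (rule nth_equalityI)
      fix t assume "t < length (map ?F [S w m..<S w m + L])"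
      then have t: "t < L" by simp
      have "?F (S w m + t) = ?F t"
      proof (cases "t < d")
        case True
        then have tl: "t < length (blk w m k)" using S_add[of w m k] dm by simp
        have "?F (S w m + t) = blk w m k ! t" using F_blk[OF tl] .
        also have "\<dots> = ?F (S w 0 + t)" using F_blk[of t w 0 k] tl blk0 by simp
        finally show ?thesis by simp
      next
        case False
        define s where "s = t - d"
        have s: "s < L - d" "t = d + s" using False t by (auto simp: s_def)
        have sa: "s < length (longest_common_prefix (f a) (f b))" using s q by simp
        have sb: "s < length (f b)" using sa lcp_len2[of "f a" "f b"] by linarith
        have sa': "s < length (f a)" using sa lcp_len[of "f a" "f b"] by linarith
        have "?F (S w m + t) = ?F (S w (m+k) + s)" using dm s by (simp add: add.assoc)
        also have "\<dots> = f b ! s" using F_block[of s w "m+k"] sb by (simp add: b_def)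
        also have "\<dots> = f a ! s" using lcp_nth[OF sa] by simp
        also have "\<dots> = ?F (S w k + s)" using F_block[of s w k] sa' by (simp add: a_def)
        finally show ?thesis using Sk s by simp
      qed
      then show "map ?F [S w m..<S w m + L] ! t = map ?F [0..<L] ! t" using t by simp
    qed simp
    then show False using Unp by simp
  qed
  have lt: "length (longest_common_prefix (f a) (f b)) < length (longest_common_prefix (f b) (f c))"
    using lab lbc by simp
  have lcp_self: "\<And>xs. longest_common_prefix xs xs = xs"
    by (induct_tac xs) auto
  have ab: "a \<noteq> b"
  proof
    assume "a = b"
    then show False using lt lcp_self[of "f b"] lcp_len[of "f b" "f c"] by simp
  qed
  have ac: "a \<noteq> c"
  proof
    assume "a = c"
    then show False using lt lcp_comm[of "f b" "f c"] by simp
  qed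
  have fr: "fragile a b c w"
    unfolding fragile_def
  proof (intro exI conjI)
    show "x \<noteq> y" by (rule xy)
    have lu: "length u = k" using upre by (metis length_map length_upt minus_nat.diff_0)
    show "prefix_inf (u @ [a]) w" using upre lu by (auto simp: prefix_inf_def a_def)
    show "factor_inf (x # u @ [b]) w" using factor_cons[OF m0, of w "Suc k"] xw u_def b_def by simp
    show "factor_inf (y # u @ [c]) w" using factor_cons[OF m'0, of w "Suc k"] yw uu c_def by simp
  qed
  show ?thesis using ab ac bc fr lt by blast
qed


lemma map_split2: "map v [i..<i + Suc (Suc n)] = v i # map v [Suc i..<Suc i + n] @ [v (Suc i + n)]"
proof -
  have "[i..<i + Suc (Suc n)] = i # [Suc i..<i + Suc (Suc n)]" using upt_conv_Cons[of i "i + Suc (Suc n)"] by simp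
  then have "[i..<i + Suc (Suc n)] = i # [Suc i..<Suc (Suc i + n)]" by simp
  moreover have "[Suc i..<Suc (Suc i + n)] = [Suc i..<Suc i + n] @ [Suc i + n]" by (rule upt_Suc_append) simp
  ultimately show ?thesis by simp
qed

lemma factor_dec:
  assumes "factor_inf (\<beta> # u @ [b]) v"
  obtains i where "\<beta> = v i" "u = map v [Suc i..<Suc i + length u]" "b = v (Suc i + length u)"
proof -
  obtain i where "\<beta> # u @ [b] = map v [i..<i + Suc (Suc (length u))]"
    using assms unfolding factor_inf_def by auto
  then have "\<beta> # u @ [b] = v i # map v [Suc i..<Suc i + length u] @ [v (Suc i + length u)]"
    by (simp only: map_split2)
  then show ?thesis using that by simp
qed

lemma dir2:
  assumes fr: "fragile a b c v"
    and lt: "length (longest_common_prefix (f a) (f b)) < length (longest_common_prefix (f b) (f c))"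
  shows "\<not> LSP_inf (morph_inf f v)"
proof
  assume LSPF: "LSP_inf (morph_inf f v)"
  let ?F = "morph_inf f v"
  obtain u \<beta> \<gamma> where bg: "\<beta> \<noteq> \<gamma>" and pa: "prefix_inf (u @ [a]) v"
    and fb': "factor_inf (\<beta> # u @ [b]) v" and fc': "factor_inf (\<gamma> # u @ [c]) v"
    using fr unfolding fragile_def by blast
  define n where "n = length u"
  obtain i where i: "\<beta> = v i" "u = map v [Suc i..<Suc i + n]" "b = v (Suc i + n)"
    using factor_dec[OF fb'] n_def by blast
  obtain j where j: "\<gamma> = v j" "u = map v [Suc j..<Suc j + n]" "c = v (Suc j + n)"
    using factor_dec[OF fc'] n_def by blast
  have pu: "u = map v [0..<n]" "a = v n" using pa by (simp_all add: prefix_inf_def n_def)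
  define ll where "ll = length (longest_common_prefix (f b) (f c))"
  define q where "q = length (longest_common_prefix (f a) (f b))"
  have lb: "ll \<le> length (f b)" using lcp_len ll_def by simp
  have lc: "ll \<le> length (f c)" using lcp_len2 ll_def by simp
  define m where "m = Suc i"
  define m' where "m' = Suc j"
  have be1: "blk v m n = blk v m' n" using blk_eq[of v m n v m'] i j m_def m'_def by simp
  have be0: "blk v 0 n = blk v m n" using blk_eq[of v 0 n v m] i pu m_def by simp
  define d where "d = length (blk v m n)"
  have dm: "S v (m+n) = S v m + d" using S_add d_def by simp
  have dm': "S v (m'+n) = S v m' + d" using S_add be1 d_def by simp
  have d0: "S v n = d" using S_add[of v 0 n] be0 d_def by simp
  define U where "U = map ?F [S v m..<S v m + (d + ll)]"
  have Um': "map ?F [S v m'..<S v m' + (d + ll)] = U"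
    unfolding U_def
  proof (rule nth_equalityI)
    fix t assume "t < length (map ?F [S v m'..<S v m' + (d + ll)])"
    then have t: "t < d + ll" by simp
    have "?F (S v m' + t) = ?F (S v m + t)"
    proof (cases "t < d")
      case True
      then show ?thesis using F_blk[of t v m n] F_blk[of t v m' n] be1 d_def by simp
    next
      case False
      define s where "s = t - d"
      have s: "s < ll" "t = d + s" using False t by (auto simp: s_def)
      have "?F (S v m' + t) = ?F (S v (m'+n) + s)" using dm' s by (simp add: add.assoc)
      also have "\<dots> = f c ! s" using F_block[of s v "m'+n"] s lc j m'_def by simp
      also have "\<dots> = f b ! s" using lcp_nth[of s "f b" "f c"] s ll_def by simp
      also have "\<dots> = ?F (S v (m+n) + s)" using F_block[of s v "m+n"] s lb i m_def by simp
      finally show ?thesis using dm s by (simp add: add.assoc)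
    qed
    then show "map ?F [S v m'..<S v m' + (d + ll)] ! t = map ?F [S v m..<S v m + (d + ll)] ! t"
      using t by simp
  qed simp
  have Sm: "0 < S v m" "0 < S v m'" using S_ge[of m v] S_ge[of m' v] m_def m'_def by auto
  have fx: "\<And>M. 0 < M \<Longrightarrow> factor_inf (v (M - 1) # map ?F [S v M..<S v M + (d + ll)]) ?F"
  proof -
    fix M :: nat assume M: "0 < M"
    have SM: "0 < S v M" using S_ge[of M v] M by simp
    have e: "v (M - 1) # map ?F [S v M..<S v M + (d + ll)] = map ?F [S v M - 1..<(S v M - 1) + Suc (d + ll)]"
      using SM F_before[OF M, of v] by (simp add: upt_conv_Cons)
    show "factor_inf (v (M - 1) # map ?F [S v M..<S v M + (d + ll)]) ?F" unfolding e by (rule factor_at)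
  qed
  have "left_special_inf U ?F"
    unfolding left_special_inf_def
  proof (intro exI conjI)
    show "\<beta> \<noteq> \<gamma>" by (rule bg)
    show "factor_inf (\<beta> # U) ?F" using fx[of m] i m_def U_def by simp
    show "factor_inf (\<gamma> # U) ?F" using fx[of m'] j m'_def Um' by simp
  qed
  then have "U = map ?F [0..<length U]" using LSPF unfolding LSP_inf_def prefix_inf_def by blast
  then have Up: "U = map ?F [0..<d + ll]" by (simp add: U_def)
  have qll: "q < ll" using lt q_def ll_def by simp
  have qa: "q \<le> length (f a)" using lcp_len q_def by simp
  have "U ! (d + q) = ?F (S v m + (d + q))" using qll by (simp add: U_def)
  also have "\<dots> = ?F (S v (m+n) + q)" using dm by (simp add: add.assoc)
  also have "\<dots> = f b ! q" using F_block[of q v "m+n"] qll lb i m_def by simp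
  finally have U1: "U ! (d + q) = f b ! q" .
  have U2: "U ! (d + q) = ?F (S v n + q)" using Up qll d0 by simp
  show False
  proof (cases "q < length (f a)")
    case True
    have "?F (S v n + q) = f a ! q" using F_block[of q v n] True pu by simp
    moreover have "f a ! q \<noteq> f b ! q" using lcp_neq[of "f a" "f b"] True qll lb q_def by simp
    ultimately show False using U1 U2 by simp
  next
    case False
    then have qe: "q = length (f a)" using qa by simp
    have "S v n + q = S v (Suc n)" using qe pu by (simp add: S_Suc)
    then have "?F (S v n + q) = \<alpha>" using F_alpha[of v "S v n + q"] by blast
    moreover have "f b ! q \<noteq> \<alpha>" using f_nalpha[of q b] qe f_ne[of a] qll lb by simp
    ultimately show False using U1 U2 by simp
  qed
qed

end

theorem lemma3:
  fixes w :: "nat \<Rightarrow> 'a::finite" and f :: "'a \<Rightarrow> 'a list"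
  assumes "LSP_inf w" and "bLSP f"
  shows "(\<not> LSP_inf (morph_inf f w) \<longleftrightarrow>
            (\<exists>a b c. a \<noteq> b \<and> a \<noteq> c \<and> b \<noteq> c \<and> fragile a b c w \<and>
               length (longest_common_prefix (f b) (f c)) > length (longest_common_prefix (f a) (f b))))
       \<and> ((\<exists>a b c. a \<noteq> b \<and> a \<noteq> c \<and> b \<noteq> c \<and> fragile a b c w \<and>
               length (longest_common_prefix (f b) (f c)) > length (longest_common_prefix (f a) (f b)))
          \<longleftrightarrow> (\<exists>a b c. a \<noteq> b \<and> a \<noteq> c \<and> b \<noteq> c \<and> fragile a b c w \<and> LSP_breaking f a b c))"
proof -
  obtain \<alpha> where "f \<alpha> = [\<alpha>]" "\<And>\<beta>. \<beta> \<noteq> \<alpha> \<Longrightarrow> \<exists>\<gamma>. f \<beta> = f \<gamma> @ [\<beta>]"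
    using assms(2) unfolding bLSP_def by blast
  then interpret blsp f \<alpha> by unfold_locales
  show ?thesis
  proof (intro conjI iffI)
    assume "\<not> LSP_inf (morph_inf f w)"
    then show "\<exists>a b c. a \<noteq> b \<and> a \<noteq> c \<and> b \<noteq> c \<and> fragile a b c w \<and>
               length (longest_common_prefix (f b) (f c)) > length (longest_common_prefix (f a) (f b))"
      using dir1[OF assms(1)] by blast
  next
    assume "\<exists>a b c. a \<noteq> b \<and> a \<noteq> c \<and> b \<noteq> c \<and> fragile a b c w \<and>
               length (longest_common_prefix (f b) (f c)) > length (longest_common_prefix (f a) (f b))"
    then show "\<not> LSP_inf (morph_inf f w)" using dir2 by blast
  next
    assume "\<exists>a b c. a \<noteq> b \<and> a \<noteq> c \<and> b \<noteq> c \<and> fragile a b c w \<and>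
               length (longest_common_prefix (f b) (f c)) > length (longest_common_prefix (f a) (f b))"
    then show "\<exists>a b c. a \<noteq> b \<and> a \<noteq> c \<and> b \<noteq> c \<and> fragile a b c w \<and> LSP_breaking f a b c"
      unfolding LSP_breaking_def using dir2 by blast
  next
    assume "\<exists>a b c. a \<noteq> b \<and> a \<noteq> c \<and> b \<noteq> c \<and> fragile a b c w \<and> LSP_breaking f a b c"
    then have "\<not> LSP_inf (morph_inf f w)" unfolding LSP_breaking_def using assms(1) by blast
    then show "\<exists>a b c. a \<noteq> b \<and> a \<noteq> c \<and> b \<noteq> c \<and> fragile a b c w \<and>
               length (longest_common_prefix (f b) (f c)) > length (longest_common_prefix (f a) (f b))"
      using dir1[OF assms(1)] by blast
  qed
qed

end
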